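(* Let $T>0$, $\mathcal{R}=\frac{2\pi}{T}$, and assume that $\mathcal{R}^{-2}=\left(\frac{T}{2\pi}\right)^2$ has irrationality measure equal to $2$. For $m,k\in\mathbb{Z}$ set \[ \lambda_2^+(m,k)=\left|\mathcal{R}|m|-\sqrt{1+k^2}\right|. \] Then there exists a constant $\widetilde{c}>0$ such that $\lambda_2^+(m,k)>\frac{\widetilde{c}}{(1+k^2)^2}$ for all $m,k\in\mathbb{Z}$.
   Context: The irrationality measure of a real number $r$ is the infimum of all $\rho$ for which there exists a constant $c$ such that $\frac{c}{q^\rho}<|r-\frac{p}{q}|$ for all $\frac{p}{q}\in\mathbb{Q}$. (In the paper, $\lambda_2^+(m,k)$ is the smaller positive eigenvalue of the Hermitian matrix $\mathrm{diag}(1,1,-1,-1)-\mathcal{R}imM_1-ikM_2$.) *)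

theory Defs
  imports Complex_Main "HOL-Library.Extended_Real"
begin

text \<open>Taken in the extended reals, so that the
infimum of the empty set is +infinity.\<close>
definition irrationality_measure :: "real \<Rightarrow> ereal" where
  "irrationality_measure r =
     Inf (ereal ` {\<rho>. \<exists>c>0. \<forall>p q::int. q > 0 \<longrightarrow>
                     c / (real_of_int q) powr \<rho> < \<bar>r - real_of_int p / real_of_int q\<bar>})"

definition lambda2p :: "real \<Rightarrow> int \<Rightarrow> int \<Rightarrow> real" where
  "lambda2p R m k = \<bar>R * real_of_int \<bar>m\<bar> - sqrt (1 + real_of_int k ^ 2)\<bar>"

end

theory Submission
  imports Defs
begin

theorem proposition5p2:
  fixes T R :: real
  assumes "T > 0"
    and "R = 2 * pi / T"
    and "irrationality_measure (R powr (-2)) = 2"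
  shows "\<exists>c>0. \<forall>m k :: int. lambda2p R m k > c / (1 + real_of_int k ^ 2) ^ 2"
proof -
  have Rpos: "R > 0" using assms(1,2) by simp
  define S where "S = {\<rho>. \<exists>c>0. \<forall>p q::int. q > 0 \<longrightarrow>
                     c / (real_of_int q) powr \<rho> < \<bar>R powr (-2) - real_of_int p / real_of_int q\<bar>}"
  have "Inf (ereal ` S) < ereal (5/2)"
    using assms(3) unfolding irrationality_measure_def S_def by simp
  then obtain r0 where "r0 \<in> S" "ereal r0 < ereal (5/2)"
    by (auto simp: Inf_less_iff)
  then have r0: "r0 < 5/2" by simp
  from \<open>r0 \<in> S\<close> obtain c where c: "c > 0"
    and cb: "\<And>p q::int. q > 0 \<Longrightarrow> c / (real_of_int q) powr r0 < \<bar>R powr (-2) - real_of_int p / real_of_int q\<bar>"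
    unfolding S_def by blast
  have x: "R powr (-2) = 1 / R^2" using Rpos
    by (simp add: powr_minus powr_realpow divide_inverse)
  define c' where "c' = min (1/2) (R^2 * c / 3)"
  have c'pos: "c' > 0" using c Rpos by (simp add: c'_def)
  show ?thesis
  proof (intro exI[of _ c'] conjI allI c'pos)
    fix m k :: int
    define n where "n = 1 + real_of_int k ^ 2"
    define M where "M = real_of_int \<bar>m\<bar>"
    define l where "l = lambda2p R m k"
    have n1: "n \<ge> 1" unfolding n_def by simp
    have M0: "M \<ge> 0" unfolding M_def by simp
    have l_def': "l = \<bar>R * M - sqrt n\<bar>" unfolding l_def lambda2p_def M_def n_def by simp
    have sq1: "sqrt n \<ge> 1" using n1 by simp
    have n2pos: "n^2 \<ge> 1" using n1 by (simp add: one_le_power)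
    show "c' / (1 + real_of_int k ^ 2) ^ 2 < lambda2p R m k"
    proof (cases "l \<ge> 1")
      case True
      have "c' / n^2 \<le> c'" using n2pos c'pos by (simp add: divide_le_eq)
      also have "\<dots> < 1" by (simp add: c'_def)
      finally show ?thesis using True unfolding l_def n_def by simp
    next
      case False
      have RM: "R * M + sqrt n \<le> 3 * sqrt n"
        using False sq1 unfolding l_def' by (auto simp: abs_if split: if_splits; linarith)
      have RMnn: "R * M + sqrt n > 0" using Rpos M0 sq1 by (simp add: add_nonneg_pos)
      have eq: "\<bar>R^2 * M^2 - n\<bar> = l * (R * M + sqrt n)"
      proof -
        have "R^2 * M^2 - n = (R * M - sqrt n) * (R * M + sqrt n)"
          using n1 by (simp add: algebra_simps power2_eq_square)
        then show ?thesis unfolding l_def' using RMnn by (simp add: abs_mult)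
      qed
      define q where "q = 1 + k^2"
      have qn: "real_of_int q = n" unfolding q_def n_def by simp
      have qpos: "q > 0" unfolding q_def by (simp add: add_pos_nonneg)
      define p where "p = m^2"
      have pM: "real_of_int p = M^2" unfolding p_def M_def by simp
      have b: "c / n powr r0 < \<bar>1 / R^2 - M^2 / n\<bar>"
        using cb[OF qpos, of p] unfolding qn pM x .
      have "\<bar>1 / R^2 - M^2 / n\<bar> = \<bar>R^2 * M^2 - n\<bar> / (R^2 * n)"
        using Rpos n1 by (simp add: field_simps abs_div abs_mult)
      with b have b2: "c / n powr r0 * (R^2 * n) < \<bar>R^2 * M^2 - n\<bar>"
        using Rpos n1 by (simp add: pos_less_divide_eq)
      have np: "n powr r0 \<le> n powr (5/2)" using r0 n1 by (intro powr_mono) auto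
      have n52: "n powr (5/2) = n^2 * sqrt n"
      proof -
        have "n powr (5/2) = n powr (2 + 1/2)" proof - have "(5/2::real) = 2 + 1/2" by simp then show ?thesis by (simp only:) qed
        also have "\<dots> = n powr 2 * n powr (1/2)" using n1 by (simp only: powr_add)
        also have "\<dots> = n^2 * sqrt n" using n1 by (simp add: powr_half_sqrt)
        finally show ?thesis .
      qed
      have npos: "n powr r0 > 0" using n1 by simp
      have "c / (n^2 * sqrt n) \<le> c / n powr r0"
        using np n52 npos c sq1 n1 by (intro divide_left_mono) (auto intro!: mult_pos_pos)
      then have b3: "c / (n^2 * sqrt n) * (R^2 * n) < l * (R * M + sqrt n)"
        using b2 eq Rpos n1 by (smt (verit) mult_right_mono zero_le_power2 mult_nonneg_nonneg)
      have l0: "l \<ge> 0" unfolding l_def' by simp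
      have "l * (R * M + sqrt n) \<le> l * (3 * sqrt n)" using RM l0 by (rule mult_left_mono)
      with b3 have b4: "c / (n^2 * sqrt n) * (R^2 * n) < l * (3 * sqrt n)" by linarith
      have "c / (n^2 * sqrt n) * (R^2 * n) = (R^2 * c / 3) / n^2 * (3 * sqrt n)"
        using n1 sq1 by (simp add: field_simps power2_eq_square)
      with b4 have "(R^2 * c / 3) / n^2 * (3 * sqrt n) < l * (3 * sqrt n)" by simp
      then have "(R^2 * c / 3) / n^2 < l" by (rule mult_right_less_imp_less) (use sq1 in simp)
      moreover have "c' / n^2 \<le> (R^2 * c / 3) / n^2"
        using n2pos by (intro divide_right_mono) (auto simp: c'_def)
      ultimately show ?thesis unfolding l_def n_def by simp
    qed
  qed
qed

end
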